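(* Assume $\chi$ is weakly generic and let $\sigma=\sigma_{a,b}$ be a Serre weight, $r_\tau=a_\tau-b_\tau+1$. Let $s,t\in\mathbf{Z}_{\ge0}^\Sigma$ satisfy, for each $\tau$, $s_\tau+t_\tau=a_\tau-b_\tau+e$ and ($s_\tau\ge r_\tau$ or $t_\tau\ge r_\tau$), and $\chi_1|_{I_K}=\prod_\tau\omega_\tau^{s_\tau}$, $\chi_2|_{I_K}=\prod_\tau\omega_\tau^{t_\tau}$. Define $J=\{\tau\in\Sigma: t_\tau\le e-1\}$ and $x_\tau=s_\tau$ if $\tau\notin J$, $x_\tau=s_\tau-r_\tau$ if $\tau\in J$. Suppose $(J,x)$ is the maximal element of $\mathcal{S}(\chi_1,\chi_2,\sigma)$. Then $J=\{\tau\in\Sigma: t_\tau<r_\tau\}$.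
   Context: Let $p$ be a prime, $K/\mathbf{Q}_p$ finite with residue field $k$, residue degree $f$, ramification index $e$; $I_K$ inertia. Fix $\varpi\in\overline{K}$ with $\varpi^{p^f-1}$ a uniformiser; $\omega\colon G_K\to k^\times$ sends $g$ to the reduction of $g(\varpi)/\varpi$. $\Sigma=\mathrm{Hom}_{\mathbf{F}_p}(k,\overline{\mathbf{F}}_p)$, $\varphi(x)=x^p$, $\omega_\tau=\tau\circ\omega$, $\Omega_{\tau,a}=\sum_{i=0}^{f-1}p^ia_{\tau\circ\varphi^i}$ for $a\in\mathbf{Z}^\Sigma$. $\chi_1,\chi_2\colon G_K\to\overline{\mathbf{F}}_p^\times$ continuous characters, $\chi=\chi_1\chi_2^{-1}=\psi\prod_\tau\omega_\tau^{n_\tau}$, $\psi$ unramified, $n_\tau\in[1,p]$, some $n_\tau<p$. Weakly generic: $n_\tau\in[e,p-e]$ for all $\tau$. Serre weight $\sigma_{a,b}=\bigotimes_\tau(\det^{b_\tau}\otimes\mathrm{Sym}^{a_\tau-b_\tau}k^2)\otimes_{k,\tau}\overline{\mathbf{F}}_p$, $a_\tau-b_\tau\in[0,p-1]$. $\mathcal{S}(\chi_1,\chi_2,\sigma)$: pairs $(J,x)$, $J\subseteq\Sigma$, $x\in\mathbf{Z}^\Sigma$, $x_\tau\in[0,e-1]$, with $\chi_1|_{I_K}=\prod_{\tau\in J}\omega_\tau^{a_\tau+1+x_\tau}\prod_{\tau\notin J}\omega_\tau^{b_\tau+x_\tau}$ and $\chi_2|_{I_K}=\prod_{\tau\notin J}\omega_\tau^{a_\tau+e-x_\tau}\prod_{\tau\in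 J}\omega_\tau^{b_\tau+e-1-x_\tau}$. With $s(J,x)_\tau=a_\tau-b_\tau+1+x_\tau$ for $\tau\in J$ and $x_\tau$ for $\tau\notin J$, the order is $(J,x)\preceq(J',x')$ iff $\Omega_{\tau,s(J',x')-s(J,x)}\in(p^f-1)\mathbf{Z}_{\ge0}$ for all $\tau$; a non-empty $\mathcal{S}$ has a unique maximal element. *)

theory Defs
  imports "HOL-Number_Theory.Cong"
begin

text \<open>Sigma = Hom(k, Fpbar) is indexed by {0..<f}: tau_i = tau_0 o phi^i, so that
  tau_i o phi = tau_{(i+1) mod f}. A function Sigma -> Z is a function nat => int (only values
  below f matter). The restriction to inertia of any continuous character G_K -> Fpbar^* is a power
  of omega_{tau_0} (which has order p^f - 1 on inertia), so such a restriction is recorded by an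
  integer exponent c modulo p^f - 1; since omega_{tau_i} = omega_{tau_0}^(p^i), the character
  prod_tau omega_tau^(v_tau) has exponent Omega_{tau_0, v}.\<close>

definition Omega :: "nat \<Rightarrow> nat \<Rightarrow> nat \<Rightarrow> (nat \<Rightarrow> int) \<Rightarrow> int" where
  "Omega p f \<tau> v = (\<Sum>i<f. int p ^ i * v ((\<tau> + i) mod f))"

definition restr_is :: "nat \<Rightarrow> nat \<Rightarrow> int \<Rightarrow> (nat \<Rightarrow> int) \<Rightarrow> bool" where
  "restr_is p f c v \<longleftrightarrow> [c = Omega p f 0 v] (mod (int p ^ f - 1))"

text \<open>chi = chi1 chi2^{-1} = psi prod omega_tau^(n_tau), psi unramified, n_tau in [1,p], some
  n_tau < p, and weakly generic: all n_tau in [e, p-e].\<close>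
definition weakly_generic :: "nat \<Rightarrow> nat \<Rightarrow> nat \<Rightarrow> int \<Rightarrow> int \<Rightarrow> bool" where
  "weakly_generic p e f c1 c2 \<longleftrightarrow>
     (\<exists>n::nat \<Rightarrow> int. (\<forall>i<f. 1 \<le> n i \<and> n i \<le> int p) \<and> (\<exists>i<f. n i < int p)
        \<and> restr_is p f (c1 - c2) n
        \<and> (\<forall>i<f. int e \<le> n i \<and> n i \<le> int p - int e))"

definition serre_weight :: "nat \<Rightarrow> nat \<Rightarrow> (nat \<Rightarrow> int) \<Rightarrow> (nat \<Rightarrow> int) \<Rightarrow> bool" where
  "serre_weight p f a b \<longleftrightarrow> (\<forall>i<f. 0 \<le> a i - b i \<and> a i - b i \<le> int p - 1)"

definition S_set :: "nat \<Rightarrow> nat \<Rightarrow> nat \<Rightarrow> int \<Rightarrow> int \<Rightarrow> (nat \<Rightarrow> int) \<Rightarrow> (nat \<Rightarrow> int)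
    \<Rightarrow> (nat set \<times> (nat \<Rightarrow> int)) set" where
  "S_set p e f c1 c2 a b = {(J, x). J \<subseteq> {..<f}
      \<and> (\<forall>i<f. 0 \<le> x i \<and> x i \<le> int e - 1) \<and> (\<forall>i\<ge>f. x i = 0)
      \<and> restr_is p f c1 (\<lambda>i. if i \<in> J then a i + 1 + x i else b i + x i)
      \<and> restr_is p f c2 (\<lambda>i. if i \<notin> J then a i + int e - x i else b i + int e - 1 - x i)}"

definition sfun :: "(nat \<Rightarrow> int) \<Rightarrow> (nat \<Rightarrow> int) \<Rightarrow> nat set \<Rightarrow> (nat \<Rightarrow> int) \<Rightarrow> nat \<Rightarrow> int" where
  "sfun a b J x \<tau> = (if \<tau> \<in> J then a \<tau> - b \<tau> + 1 + x \<tau> else x \<tau>)"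

definition S_le :: "nat \<Rightarrow> nat \<Rightarrow> (nat \<Rightarrow> int) \<Rightarrow> (nat \<Rightarrow> int)
    \<Rightarrow> nat set \<times> (nat \<Rightarrow> int) \<Rightarrow> nat set \<times> (nat \<Rightarrow> int) \<Rightarrow> bool" where
  "S_le p f a b Jx Jx' \<longleftrightarrow> (\<forall>\<tau><f. \<exists>m::int. m \<ge> 0 \<and>
      Omega p f \<tau> (\<lambda>i. sfun a b (fst Jx') (snd Jx') i - sfun a b (fst Jx) (snd Jx) i)
        = (int p ^ f - 1) * m)"

end

theory Submission
  imports Defs
begin

lemma sum_bounds:
  fixes p :: int and w :: "nat \<Rightarrow> int"
  assumes p: "p \<ge> 2" and w: "\<forall>i<k. 1 - p \<le> w i \<and> w i \<le> 2*p - 1"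
  shows "(p-1) * (\<Sum>i<k. p^i * w i) \<le> (2*p-1) * (p^k - 1) \<and> 1 - p^k \<le> (\<Sum>i<k. p^i * w i)"
  using w
proof (induction k)
  case 0 then show ?case by simp
next
  case (Suc k)
  let ?S = "\<Sum>i<k. p^i * w i"
  have IH: "(p-1) * ?S \<le> (2*p-1) * (p^k - 1)" "1 - p^k \<le> ?S" using Suc by auto
  have wk: "1 - p \<le> w k" "w k \<le> 2*p-1" using Suc.prems by auto
  have pk: "p^k > 0" using p by simp
  have a: "p^k * w k \<le> p^k * (2*p-1)" using wk pk by (intro mult_left_mono) auto
  have b: "p^k * (1-p) \<le> p^k * w k" using wk pk by (intro mult_left_mono) auto
  have c: "(p-1) * (p^k * w k) \<le> (p-1) * (p^k * (2*p-1))" using a p by (intro mult_left_mono) auto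
  have "(p-1) * (\<Sum>i<Suc k. p^i * w i) = (p-1) * ?S + (p-1) * (p^k * w k)"
    by (simp add: algebra_simps)
  also have "\<dots> \<le> (2*p-1) * (p^k - 1) + (p-1) * (p^k * (2*p-1))" using IH c by linarith
  also have "\<dots> = (2*p-1) * (p^Suc k - 1)" by (simp add: algebra_simps)
  finally have 1: "(p-1) * (\<Sum>i<Suc k. p^i * w i) \<le> (2*p-1) * (p^Suc k - 1)" .
  have "1 - p^Suc k = (1 - p^k) + p^k * (1-p)" by (simp add: algebra_simps)
  also have "\<dots> \<le> ?S + p^k * w k" using IH b by linarith
  finally show ?case using 1 by simp
qed

lemma core:
  fixes p :: int and z :: "nat \<Rightarrow> int" and f :: nat
  assumes p: "p \<ge> 2" and f: "f \<ge> 1"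
    and zb: "\<forall>i<f. 1 - p \<le> z i \<and> z i \<le> 2*p - 1"
    and z0: "2 \<le> z 0" "z 0 \<le> p - 2"
    and dv: "(p^f - 1) dvd (\<Sum>i<f. p^i * z i)"
  shows "f \<ge> 2 \<and> z (f - 1) \<ge> 2*p - 2"
proof -
  obtain k where fk: "f = Suc k" using f by (cases f) auto
  define R where "R = (\<Sum>i<k. p^i * z (Suc i))"
  define P' where "P' = p^k"
  have P'pos: "P' \<ge> 1" using p unfolding P'_def by simp
  have "(\<Sum>i<f. p^i * z i) = p^0 * z 0 + (\<Sum>i<k. p^Suc i * z (Suc i))"
    unfolding fk by (rule sum.lessThan_Suc_shift)
  also have "\<dots> = z 0 + p * R" by (simp add: R_def sum_distrib_left mult.assoc)
  finally have sumeq: "(\<Sum>i<f. p^i * z i) = z 0 + p * R" .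
  have Rb: "(p-1) * R \<le> (2*p-1) * (P' - 1) \<and> 1 - P' \<le> R"
    unfolding R_def P'_def using sum_bounds[OF p, of k "\<lambda>i. z (Suc i)"] zb fk by auto
  have Meq: "p^f - 1 = p * P' - 1" unfolding fk P'_def by simp
  obtain m where m: "z 0 + p * R = (p * P' - 1) * m" using dv sumeq Meq by (auto elim: dvdE)
  have Mpos: "p * P' - 1 > 0" using p P'pos by (smt (verit) mult_le_cancel_left1)
  have m2: "m = 2"
  proof -
    have "m \<ge> 0"
    proof (rule ccontr)
      assume "\<not> m \<ge> 0"
      then have "(p * P' - 1) * m \<le> -(p * P' - 1)" using Mpos by (smt (verit) mult_le_cancel_left1 mult_minus_right)
      moreover have "p * R \<ge> p * (1 - P')" using Rb p by (intro mult_left_mono) auto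
      ultimately show False using m z0 by (simp add: algebra_simps)
    qed
    moreover have "m \<noteq> 0"
    proof
      assume "m = 0"
      then have "z 0 = p * (-R)" using m by simp
      then have "p dvd z 0" by simp
      then show False using zdvd_imp_le[of p "z 0"] z0 by linarith
    qed
    moreover have "m \<noteq> 1"
    proof
      assume "m = 1"
      then have "z 0 + 1 = p * (P' - R)" using m by (simp add: algebra_simps)
      then have "p dvd (z 0 + 1)" by simp
      then show False using zdvd_imp_le[of p "z 0 + 1"] z0 by linarith
    qed
    moreover have "\<not> m \<ge> 3"
    proof
      assume m3: "m \<ge> 3"
      have "(p-1) * ((p * P' - 1) * m) \<ge> (p-1) * ((p * P' - 1) * 3)"
        using m3 Mpos p by (intro mult_left_mono) auto
      moreover have "(p-1) * (z 0 + p * R) \<le> (p-1)*(p-2) + p * ((2*p-1) * (P' - 1))"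
      proof -
        have "(p-1) * z 0 \<le> (p-1) * (p-2)" using z0 p by (intro mult_left_mono) auto
        moreover have "p * ((p-1) * R) \<le> p * ((2*p-1) * (P' - 1))" using Rb p by (intro mult_left_mono) auto
        ultimately show ?thesis by (simp add: algebra_simps)
      qed
      moreover have key: "(p-1)*(p-2) + p*((2*p-1)*(P'-1)) < (p-1)*((p*P'-1)*3)"
      proof -
        have "(p-1)*((p*P'-1)*3) - ((p-1)*(p-2) + p*((2*p-1)*(P'-1))) = p*P'*(p-2) + p*(p-1) + 1"
          by (simp add: algebra_simps)
        moreover have "p*P'*(p-2) \<ge> 0" using p P'pos by simp
        moreover have "p*(p-1) \<ge> 0" using p by simp
        ultimately show ?thesis by linarith
      qed
      moreover have "(p-1)*(z 0 + p*R) = (p-1)*((p*P'-1)*m)" using m by simp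
      ultimately show False by linarith
    qed
    ultimately show ?thesis by linarith
  qed
  have z0e: "z 0 = p - 2"
  proof -
    have "z 0 + 2 = p * (2 * P' - R)" using m m2 by (simp add: algebra_simps)
    then have "p dvd (z 0 + 2)" by simp
    then obtain c where c: "z 0 + 2 = p * c" by (auto elim: dvdE)
    have "c \<ge> 1" using c z0 p by (smt (verit) mult_le_cancel_left1 mult_nonneg_nonpos)
    moreover have "c \<le> 1" using c z0 p by (smt (verit) mult_le_cancel_left1 mult_less_cancel_left1)
    ultimately show ?thesis using c by simp
  qed
  have "p * (R + 1) = p * (2*P')" using m m2 z0e by (simp add: algebra_simps)
  then have R1: "R = 2 * P' - 1" using p by simp
  show ?thesis
  proof (cases k)
    case 0
    then show ?thesis using R1 unfolding R_def P'_def by simp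
  next
    case (Suc g)
    define R' where "R' = (\<Sum>i<g. p^i * z (Suc i))"
    define Q where "Q = p^g"
    have Qpos: "Q \<ge> 1" using p unfolding Q_def by simp
    have RR: "R = R' + Q * z (Suc g)" unfolding R_def R'_def Q_def Suc fk by simp
    have R'b: "(p-1) * R' \<le> (2*p-1) * (Q - 1)"
      unfolding R'_def Q_def using sum_bounds[OF p, of g "\<lambda>i. z (Suc i)"] zb fk Suc by auto
    have PQ: "P' = p * Q" unfolding P'_def Q_def Suc by simp
    have "z (Suc g) \<ge> 2*p - 2"
    proof (rule ccontr)
      assume "\<not> z (Suc g) \<ge> 2*p - 2"
      then have zf: "z (Suc g) \<le> 2*p - 3" by simp
      have "(p-1) * (Q * z (Suc g)) \<le> (p-1) * (Q * (2*p-3))" using zf Qpos p by (intro mult_left_mono) auto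
      then have "(p-1) * R \<le> (2*p-1) * (Q - 1) + (p-1) * (Q * (2*p-3))" using RR R'b by (simp add: algebra_simps)
      moreover have "(p-1) * R = (p-1) * (2 * p * Q - 1)" using R1 PQ by simp
      moreover have "Q * (p - 2) \<ge> 0" using Qpos p by simp
      moreover have "((2*p-1)*(Q-1) + (p-1)*(Q*(2*p-3))) - (p-1)*(2*p*Q-1) = -(Q*(p-2)) - p"
        by (simp add: algebra_simps)
      ultimately show False using p by linarith
    qed
    then show ?thesis using fk Suc by simp
  qed
qed

lemma mod_lt2:
  fixes a f :: nat assumes "a < 2*f" shows "a mod f = (if a < f then a else a - f)"
proof (cases "a < f")
  case True then show ?thesis by simp
next
  case False
  then have "a mod f = (a - f) mod f" by (simp add: mod_if)
  also have "\<dots> = a - f" using assms False by simp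
  finally show ?thesis using False by simp
qed

lemma Omega_shift:
  assumes "f \<ge> 1"
  shows "int p * Omega p f (Suc \<tau>) v - Omega p f \<tau> v = (int p ^ f - 1) * v (\<tau> mod f)"
proof -
  obtain g where fg: "f = Suc g" using assms by (cases f) auto
  define A where "A = (\<Sum>i<g. int p ^ i * v ((Suc \<tau> + i) mod f))"
  have "Omega p f \<tau> v = int p ^ 0 * v ((\<tau> + 0) mod f) + (\<Sum>i<g. int p ^ Suc i * v ((\<tau> + Suc i) mod f))"
    unfolding Omega_def fg by (rule sum.lessThan_Suc_shift)
  also have "\<dots> = v (\<tau> mod f) + int p * A"
    by (simp add: A_def sum_distrib_left mult.assoc)
  finally have 1: "Omega p f \<tau> v = v (\<tau> mod f) + int p * A" .
  have "Omega p f (Suc \<tau>) v = A + int p ^ g * v ((Suc \<tau> + g) mod f)"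
    unfolding Omega_def A_def fg by simp
  also have "(Suc \<tau> + g) mod f = \<tau> mod f"
  proof -
    have e: "Suc \<tau> + g = \<tau> + f" using fg by simp
    show ?thesis unfolding e by (rule mod_add_self2)
  qed
  finally have 2: "Omega p f (Suc \<tau>) v = A + int p ^ g * v (\<tau> mod f)" .
  have 3: "int p * (A + int p ^ g * v (\<tau> mod f)) - (v (\<tau> mod f) + int p * A) = (int p ^ Suc g - 1) * v (\<tau> mod f)"
    by (simp add: algebra_simps)
  show ?thesis unfolding 1 2 using 3 fg by simp
qed

lemma Omega_dvd:
  assumes f: "f \<ge> 1" and cp: "coprime (int p) (int p ^ f - 1)"
    and d: "(int p ^ f - 1) dvd Omega p f 0 v"
  shows "(int p ^ f - 1) dvd Omega p f \<tau> v"
proof (induction \<tau>)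
  case 0 then show ?case using d by simp
next
  case (Suc \<tau>)
  have "int p * Omega p f (Suc \<tau>) v = Omega p f \<tau> v + (int p ^ f - 1) * v (\<tau> mod f)"
    using Omega_shift[OF f, of p \<tau> v] by simp
  then have "(int p ^ f - 1) dvd int p * Omega p f (Suc \<tau>) v" using Suc by simp
  then show ?case using cp by (simp add: coprime_dvd_mult_right_iff coprime_commute)
qed

lemma coprime_p_M:
  assumes "f \<ge> 1" shows "coprime (p::int) (p ^ f - 1)"
proof -
  have "coprime (p ^ f) (p ^ f - 1)" by (rule coprime_doff_one_right)
  then show ?thesis using coprime_power_left_iff[of p f "p^f-1"] assms by auto
qed

lemma Omega_cong:
  assumes "\<forall>i<f. v i = w i" shows "Omega p f \<tau> v = Omega p f \<tau> w"
proof (cases "f = 0")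
  case True then show ?thesis by (simp add: Omega_def)
next
  case False
  then show ?thesis unfolding Omega_def using assms by (intro sum.cong) auto
qed

lemma Omega_add: "Omega p f \<tau> (\<lambda>i. v i + w i) = Omega p f \<tau> v + Omega p f \<tau> w"
  unfolding Omega_def by (simp add: algebra_simps sum.distrib)

lemma Omega_delta:
  assumes j: "j < f" and t: "\<tau> < f"
  shows "Omega p f \<tau> (\<lambda>i. if i = j then c else 0) = int p ^ ((j + f - \<tau>) mod f) * c"
proof -
  have iff: "((\<tau> + i) mod f = j) = (i = (j + f - \<tau>) mod f)" if i: "i < f" for i
  proof -
    have 1: "(\<tau> + i) mod f = (if \<tau> + i < f then \<tau> + i else \<tau> + i - f)" using i t by (intro mod_lt2) auto
    have 2: "(j + f - \<tau>) mod f = (if j + f - \<tau> < f then j + f - \<tau> else j + f - \<tau> - f)" using j t by (intro mod_lt2) auto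
    show ?thesis unfolding 1 2 using i j t by auto
  qed
  have "Omega p f \<tau> (\<lambda>i. if i = j then c else 0) = (\<Sum>i<f. if i = (j + f - \<tau>) mod f then int p ^ i * c else 0)"
    unfolding Omega_def by (intro sum.cong) (auto simp: iff)
  also have "\<dots> = int p ^ ((j + f - \<tau>) mod f) * c" using t by (simp add: sum.delta')
  finally show ?thesis .
qed


lemma cong_add_dvd:
  fixes M c X D :: int
  assumes "[c = X] (mod M)" "M dvd D" shows "[c = X + D] (mod M)"
proof -
  have "M dvd c - X" using assms(1) unfolding cong_def by (simp add: mod_eq_dvd_iff)
  then have "M dvd (c - X) - D" using assms(2) by simp
  then show ?thesis unfolding cong_def by (simp add: mod_eq_dvd_iff algebra_simps)
qed

theorem lemma5p9:
  fixes p e f :: nat and c1 c2 :: int and a b s t :: "nat \<Rightarrow> int"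
    and J :: "nat set" and x :: "nat \<Rightarrow> int"
  assumes "prime p" and "f \<ge> 1" and "e \<ge> 1"
    and "weakly_generic p e f c1 c2"
    and "serre_weight p f a b"
    and "\<forall>\<tau><f. s \<tau> \<ge> 0 \<and> t \<tau> \<ge> 0"
    and "\<forall>\<tau><f. s \<tau> + t \<tau> = a \<tau> - b \<tau> + int e"
    and "\<forall>\<tau><f. s \<tau> \<ge> a \<tau> - b \<tau> + 1 \<or> t \<tau> \<ge> a \<tau> - b \<tau> + 1"
    and "restr_is p f c1 s" and "restr_is p f c2 t"
    and "J = {\<tau>. \<tau> < f \<and> t \<tau> \<le> int e - 1}"
    and "x = (\<lambda>\<tau>. if \<tau> < f then (if \<tau> \<in> J then s \<tau> - (a \<tau> - b \<tau> + 1) else s \<tau>) else 0)"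
    and "(J, x) \<in> S_set p e f c1 c2 a b"
    and "\<forall>y \<in> S_set p e f c1 c2 a b. S_le p f a b y (J, x)"
  shows "J = {\<tau>. \<tau> < f \<and> t \<tau> < a \<tau> - b \<tau> + 1}"
proof
  show "{\<tau>. \<tau> < f \<and> t \<tau> < a \<tau> - b \<tau> + 1} \<subseteq> J"
  proof
    fix \<tau> assume "\<tau> \<in> {\<tau>. \<tau> < f \<and> t \<tau> < a \<tau> - b \<tau> + 1}"
    then have "\<tau> < f" "t \<tau> < a \<tau> - b \<tau> + 1" by auto
    then show "\<tau> \<in> J" using assms(7,8,11) by force
  qed
next
  show "J \<subseteq> {\<tau>. \<tau> < f \<and> t \<tau> < a \<tau> - b \<tau> + 1}"
  proof
    fix \<tau>0 assume t0J: "\<tau>0 \<in> J"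
    show "\<tau>0 \<in> {\<tau>. \<tau> < f \<and> t \<tau> < a \<tau> - b \<tau> + 1}"
    proof (rule ccontr)
      assume nin: "\<tau>0 \<notin> {\<tau>. \<tau> < f \<and> t \<tau> < a \<tau> - b \<tau> + 1}"
      define r where "r = (\<lambda>i. a i - b i + 1)"
      define M where "M = int p ^ f - 1"
      have p2: "p \<ge> 2" using assms(1) by (simp add: prime_ge_2_nat)
      have pf: "int p \<le> int p ^ f" using power_increasing[of 1 f "int p"] p2 assms(2) by simp
      then have Mpos: "M > 0" using p2 unfolding M_def by linarith
      have cp: "coprime (int p) M" using coprime_p_M[OF assms(2)] unfolding M_def by simp
      have t0f: "\<tau>0 < f" and tt0: "t \<tau>0 \<le> int e - 1" using t0J assms(11) by auto
      have tr0: "t \<tau>0 \<ge> r \<tau>0" using nin t0f unfolding r_def by auto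
      have rb: "\<forall>i<f. 1 \<le> r i \<and> r i \<le> int p" using assms(5) unfolding serre_weight_def r_def by force
      have st: "\<forall>i<f. s i + t i = r i - 1 + int e" using assms(7) unfolding r_def by auto
      have st0: "\<forall>i<f. s i \<ge> 0 \<and> t i \<ge> 0" using assms(6) by auto
      have s0: "r \<tau>0 \<le> s \<tau>0" "s \<tau>0 \<le> int e - 1" using st tt0 tr0 t0f rb by force+
      have e2: "int e \<ge> 2" using rb t0f tr0 tt0 by force
      obtain n where n: "\<forall>i<f. int e \<le> n i \<and> n i \<le> int p - int e" "restr_is p f (c1 - c2) n"
        using assms(4) unfolding weakly_generic_def by auto
      define y where "y = (\<lambda>i. n i - s i + t i)"
      have Oy: "Omega p f 0 y = Omega p f 0 n - Omega p f 0 s + Omega p f 0 t"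
        unfolding Omega_def y_def by (simp add: algebra_simps sum.distrib sum_subtractf)
      have d1: "M dvd (c1 - c2) - Omega p f 0 n" using n(2) unfolding restr_is_def cong_def M_def
        by (simp add: mod_eq_dvd_iff)
      have d2: "M dvd c1 - Omega p f 0 s" using assms(9) unfolding restr_is_def cong_def M_def
        by (simp add: mod_eq_dvd_iff)
      have d3: "M dvd c2 - Omega p f 0 t" using assms(10) unfolding restr_is_def cong_def M_def
        by (simp add: mod_eq_dvd_iff)
      have eqy: "Omega p f 0 y = (c1 - Omega p f 0 s) - (c2 - Omega p f 0 t) - ((c1 - c2) - Omega p f 0 n)"
        unfolding Oy by simp
      have "M dvd (c1 - Omega p f 0 s) - (c2 - Omega p f 0 t) - ((c1 - c2) - Omega p f 0 n)"
        by (rule dvd_diff[OF dvd_diff[OF d2 d3] d1])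
      then have "M dvd Omega p f 0 y" unfolding eqy .
      then have dy: "M dvd Omega p f \<tau>0 y" using Omega_dvd[OF assms(2)] cp unfolding M_def by blast
      define z where "z = (\<lambda>i. y ((\<tau>0 + i) mod f))"
      have yb: "\<forall>j<f. 1 - int p \<le> y j \<and> y j \<le> 2 * int p - 1"
      proof (intro allI impI)
        fix j assume "j < f"
        then show "1 - int p \<le> y j \<and> y j \<le> 2 * int p - 1"
          using n(1) st st0 rb unfolding y_def by force
      qed
      have zb: "\<forall>i<f. 1 - int p \<le> z i \<and> z i \<le> 2 * int p - 1"
        unfolding z_def using yb assms(2) by auto
      have z0: "2 \<le> z 0" "z 0 \<le> int p - 2"
        unfolding z_def using t0f n(1) s0 tt0 tr0 rb unfolding y_def by force+
      have dz: "(int p ^ f - 1) dvd (\<Sum>i<f. int p ^ i * z i)"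
        using dy unfolding M_def Omega_def z_def by simp
      have cr: "f \<ge> 2 \<and> z (f - 1) \<ge> 2 * int p - 2"
        using core[of "int p" f z] p2 assms(2) zb z0 dz by simp
      define q where "q = (\<tau>0 + (f - 1)) mod f"
      have qf: "q < f" unfolding q_def using assms(2) by simp
      have yq: "y q \<ge> 2 * int p - 2" using cr unfolding z_def q_def by (simp del: diff_Suc_1 add_diff_assoc)
      have sq: "s q = 0" and rq: "r q \<ge> int p - 1"
        using yq n(1) st st0 rb qf unfolding y_def by force+
      have qv: "q = (if \<tau>0 = 0 then f - 1 else \<tau>0 - 1)"
      proof -
        have "q = (if \<tau>0 + (f - 1) < f then \<tau>0 + (f - 1) else \<tau>0 + (f - 1) - f)"
          unfolding q_def using t0f by (intro mod_lt2) auto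
        then show ?thesis using t0f assms(2) by auto
      qed
      have qne: "q \<noteq> \<tau>0" using qv cr t0f by auto
      have qrot: "(q + f - \<tau>0) mod f = f - 1"
      proof -
        have "(q + f - \<tau>0) mod f = (if q + f - \<tau>0 < f then q + f - \<tau>0 else q + f - \<tau>0 - f)"
          using qf t0f by (intro mod_lt2) auto
        then show ?thesis using qv t0f cr by auto
      qed
      have qJ: "q \<notin> J" using assms(11) st rq qf sq p2 by force
      have xt0: "x \<tau>0 = s \<tau>0 - r \<tau>0" using assms(12) t0f t0J unfolding r_def by simp
      have xq: "x q = 0" using assms(12) qf qJ sq by simp
      have JS: "J \<subseteq> {..<f}" "\<forall>i<f. 0 \<le> x i \<and> x i \<le> int e - 1" "\<forall>i\<ge>f. x i = 0"
        "restr_is p f c1 (\<lambda>i. if i \<in> J then a i + 1 + x i else b i + x i)"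
        "restr_is p f c2 (\<lambda>i. if i \<notin> J then a i + int e - x i else b i + int e - 1 - x i)"
        using assms(13) unfolding S_set_def by auto
      define J' where "J' = insert q (J - {\<tau>0})"
      define x' where "x' = x(\<tau>0 := s \<tau>0 - 1, q := int p - r q)"
      have x'o: "x' i = x i" if "i \<noteq> q" "i \<noteq> \<tau>0" for i using that unfolding x'_def by simp
      have x't0: "x' \<tau>0 = s \<tau>0 - 1" using qne unfolding x'_def by simp
      have x'q: "x' q = int p - r q" unfolding x'_def by simp
      have J'o: "(i \<in> J') = (i \<in> J)" if "i \<noteq> q" "i \<noteq> \<tau>0" for i using that unfolding J'_def by auto
      have t0J': "\<tau>0 \<notin> J'" using qne unfolding J'_def by auto
      have qJ': "q \<in> J'" unfolding J'_def by auto
      have pq: "int p ^ q * int p - int p ^ \<tau>0 = (if \<tau>0 = 0 then M else 0)"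
      proof (cases "\<tau>0 = 0")
        case True
        then have "q = f - 1" using qv by simp
        then have "int p ^ q * int p = int p ^ f" using assms(2) by (cases f) auto
        then show ?thesis using True unfolding M_def by simp
      next
        case False
        then have "q = \<tau>0 - 1" using qv by simp
        then have "int p ^ q * int p = int p ^ \<tau>0" using False by (cases \<tau>0) auto
        then show ?thesis using False by simp
      qed
      have Mdvd: "M dvd int p ^ q * int p - int p ^ \<tau>0" unfolding pq by simp
      define D where "D = (\<lambda>i::nat. (if i = q then int p else 0) + (if i = \<tau>0 then -1 else 0))"
      have OD: "Omega p f 0 D = int p ^ q * int p - int p ^ \<tau>0"
      proof -
        have "Omega p f 0 D = Omega p f 0 (\<lambda>i. if i = q then int p else 0) + Omega p f 0 (\<lambda>i. if i = \<tau>0 then -1 else 0)"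
          unfolding D_def by (rule Omega_add)
        also have "\<dots> = int p ^ q * int p - int p ^ \<tau>0"
          using Omega_delta[OF qf, of 0 p "int p"] Omega_delta[OF t0f, of 0 p "-1"] qf t0f assms(2) by simp
        finally show ?thesis .
      qed
      have mem: "(J', x') \<in> S_set p e f c1 c2 a b"
      proof -
        have c1: "J' \<subseteq> {..<f}" using JS(1) qf unfolding J'_def by auto
        have c2: "\<forall>i<f. 0 \<le> x' i \<and> x' i \<le> int e - 1"
        proof (intro allI impI)
          fix i assume "i < f"
          show "0 \<le> x' i \<and> x' i \<le> int e - 1"
          proof (cases "i = q")
            case True then show ?thesis using x'q rq rb qf e2 by force
          next
            case False
            show ?thesis
            proof (cases "i = \<tau>0")
              case True then show ?thesis using x't0 s0 rb t0f by force
            next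
              case False2: False
              then show ?thesis using x'o[OF False False2] JS(2) \<open>i < f\<close> by simp
            qed
          qed
        qed
        have c3: "\<forall>i\<ge>f. x' i = 0" using JS(3) qf t0f x'o by force
        let ?v1 = "\<lambda>i. if i \<in> J then a i + 1 + x i else b i + x i"
        let ?v1' = "\<lambda>i. if i \<in> J' then a i + 1 + x' i else b i + x' i"
        have e1: "\<forall>i<f. ?v1' i = ?v1 i + D i"
        proof (intro allI impI)
          fix i assume "i < f"
          show "?v1' i = ?v1 i + D i"
          proof (cases "i = q")
            case True then show ?thesis using qJ' qJ x'q xq qne sq unfolding D_def r_def by simp
          next
            case False
            show ?thesis
            proof (cases "i = \<tau>0")
              case True then show ?thesis using t0J' t0J x't0 xt0 qne unfolding D_def r_def by simp
            next
              case False2: False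
              then show ?thesis using x'o[OF False False2] J'o[OF False False2] False unfolding D_def by simp
            qed
          qed
        qed
        have "Omega p f 0 ?v1' = Omega p f 0 (\<lambda>i. ?v1 i + D i)" using e1 by (rule Omega_cong)
        also have "\<dots> = Omega p f 0 ?v1 + Omega p f 0 D" by (rule Omega_add)
        finally have o1: "Omega p f 0 ?v1' = Omega p f 0 ?v1 + (int p ^ q * int p - int p ^ \<tau>0)" unfolding OD .
        have c4: "restr_is p f c1 ?v1'"
          using JS(4) Mdvd unfolding restr_is_def o1 M_def by (rule cong_add_dvd)
        let ?v2 = "\<lambda>i. if i \<notin> J then a i + int e - x i else b i + int e - 1 - x i"
        let ?v2' = "\<lambda>i. if i \<notin> J' then a i + int e - x' i else b i + int e - 1 - x' i"
        have e2': "\<forall>i<f. ?v2' i = ?v2 i + (- D i)"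
        proof (intro allI impI)
          fix i assume "i < f"
          show "?v2' i = ?v2 i + (- D i)"
          proof (cases "i = q")
            case True then show ?thesis using qJ' qJ x'q xq qne sq unfolding D_def r_def by simp
          next
            case False
            show ?thesis
            proof (cases "i = \<tau>0")
              case True then show ?thesis using t0J' t0J x't0 xt0 qne unfolding D_def r_def by simp
            next
              case False2: False
              then show ?thesis using x'o[OF False False2] J'o[OF False False2] False unfolding D_def by simp
            qed
          qed
        qed
        have "Omega p f 0 ?v2' = Omega p f 0 (\<lambda>i. ?v2 i + (- D i))" using e2' by (rule Omega_cong)
        also have "\<dots> = Omega p f 0 ?v2 + Omega p f 0 (\<lambda>i. - D i)" by (rule Omega_add)
        also have "Omega p f 0 (\<lambda>i. - D i) = - Omega p f 0 D" unfolding Omega_def by (simp add: sum_negf)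
        finally have o2: "Omega p f 0 ?v2' = Omega p f 0 ?v2 + (- (int p ^ q * int p - int p ^ \<tau>0))" unfolding OD .
        have Mdvd': "M dvd - (int p ^ q * int p - int p ^ \<tau>0)" by (rule dvd_minus_iff[THEN iffD2, OF Mdvd])
        have c5: "restr_is p f c2 ?v2'"
          using JS(5) Mdvd' unfolding restr_is_def o2 M_def by (rule cong_add_dvd)
        show ?thesis unfolding S_set_def using c1 c2 c3 c4 c5 by simp
      qed
      have "S_le p f a b (J', x') (J, x)" using assms(14) mem by blast
      then obtain m where m: "m \<ge> 0"
        "Omega p f \<tau>0 (\<lambda>i. sfun a b J x i - sfun a b J' x' i) = M * m"
        using t0f unfolding S_le_def M_def by auto
      have e3: "\<forall>i<f. sfun a b J x i - sfun a b J' x' i = (if i = \<tau>0 then 1 else 0) + (if i = q then - int p else 0)"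
      proof (intro allI impI)
        fix i assume "i < f"
        show "sfun a b J x i - sfun a b J' x' i = (if i = \<tau>0 then 1 else 0) + (if i = q then - int p else 0)"
        proof (cases "i = q")
          case True then show ?thesis using qJ' qJ x'q xq qne unfolding sfun_def r_def by simp
        next
          case False
          show ?thesis
          proof (cases "i = \<tau>0")
            case True then show ?thesis using t0J' t0J x't0 xt0 qne unfolding sfun_def r_def by simp
          next
            case False2: False
            then show ?thesis using x'o[OF False False2] J'o[OF False False2] False unfolding sfun_def by simp
          qed
        qed
      qed
      have "Omega p f \<tau>0 (\<lambda>i. sfun a b J x i - sfun a b J' x' i)
          = Omega p f \<tau>0 (\<lambda>i. (if i = \<tau>0 then 1 else 0) + (if i = q then - int p else 0))"
        using e3 by (rule Omega_cong)
      also have "\<dots> = Omega p f \<tau>0 (\<lambda>i. if i = \<tau>0 then 1 else 0) + Omega p f \<tau>0 (\<lambda>i. if i = q then - int p else 0)"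
        by (rule Omega_add)
      also have "\<dots> = 1 - int p ^ (f - 1) * int p"
        using Omega_delta[OF t0f t0f, of p 1] Omega_delta[OF qf t0f, of p "- int p"] qrot t0f by simp
      also have "\<dots> = - M" unfolding M_def using assms(2) by (cases f) auto
      finally have "M * m = - M" using m(2) by simp
      then have "M * (m + 1) = 0" by (simp add: algebra_simps)
      then show False using Mpos m(1) by simp
    qed
  qed
qed

end
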